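(* Let $q\ge 3$ be a prime power, $e\ge 3$, $a\in\mathbb{F}_{q^e}$ with $a\neq 0$, $\ell=q^{e-1}+\cdots+q+1$, and let $r=h(\ell-q^{e-1}-1)+1$ for some integer $1\le h\le q-1$. Let $N=2q^{e-1}-q^{e-2}-1$, for $i\in\mathbb{Z}$ let $A_i=i\ell-\frac{rN}{q-1}$, let $S_N=\{A_i: i\in\mathbb{Z},\ 0\le A_i\le N\}$, and let $j=2hq^{e-3}+h\sum_{i=0}^{e-4}q^i$. Then (i) $A_j=(h-2)q^{e-2}+(2h-1)q^{e-3}+(h-1)\sum_{i=0}^{e-4}q^i$; (ii) $A_{j+1}=q^{e-1}+(h-1)q^{e-2}+2hq^{e-3}+h\sum_{i=0}^{e-4}q^i$; (iii) $S_N=\{A_{j+1}\}$ if $h=1$, $S_N=\{A_j,A_{j+1}\}$ if $2\le h\le q-2$, and $S_N=\{A_j\}$ if $h=q-1$.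
   Context: Empty sums (e.g. $\sum_{i=0}^{e-4}$ when $e=3$) equal $0$. *)

theory Defs
  imports Complex_Main "HOL-Computational_Algebra.Primes"
begin

definition prime_power :: "nat \<Rightarrow> bool" where
  "prime_power q \<longleftrightarrow> (\<exists>p k. prime p \<and> k \<ge> 1 \<and> q = p ^ k)"

definition A :: "int \<Rightarrow> int \<Rightarrow> int \<Rightarrow> int \<Rightarrow> int \<Rightarrow> rat" where
  "A q ell r N i = of_int (i * ell) - of_int (r * N) / of_int (q - 1)"

end

theory Submission
  imports Defs
begin

lemma core_id:
  fixes Q P s h :: int
  assumes P: "P = (Q-1)*s+1"
  shows "(2*h*P + h*s) * (s + P + Q*P + Q^2*P) - (h*(Q*P+P+s-1)+1)*(2*Q*P+P+s)
       = (h-2)*Q*P + (2*h-1)*P + (h-1)*s"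
  unfolding P by (simp add: algebra_simps power2_eq_square)

lemma core_set:
  fixes Q P s h ell r M j i :: int
  assumes Q: "Q \<ge> 3" and s: "s \<ge> 0" and P: "P = (Q-1)*s+1" and h1: "1 \<le> h" and h2: "h \<le> Q-1"
    and ell: "ell = s + P + Q*P + Q^2*P"
    and Aj: "j*ell - r*M = (h-2)*Q*P + (2*h-1)*P + (h-1)*s"
  shows "(0 \<le> i*ell - r*M \<and> i*ell - r*M \<le> (Q-1)*(2*Q*P+P+s)) \<longleftrightarrow> ((i = j \<and> 2 \<le> h) \<or> (i = j+1 \<and> h \<le> Q-2))"
proof -
  define a where "a = (h-2)*Q*P + (2*h-1)*P + (h-1)*s"
  define X1 where "X1 = h*Q*P"
  define X2 where "X2 = h*P"
  define X3 where "X3 = h*s"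
  define Y1 where "Y1 = Q*P"
  define Y2 where "Y2 = Q*Q*P"
  define Y3 where "Y3 = Q*s"
  have aX: "a = X1 - 2*Y1 + 2*X2 - P + X3 - s" unfolding a_def X1_def Y1_def X2_def X3_def by (simp add: algebra_simps)
  have ellX: "ell = s + P + Y1 + Y2" unfolding ell Y1_def Y2_def by (simp add: power2_eq_square)
  have NX: "(Q-1)*(2*Q*P+P+s) = 2*Y2 - Y1 - P + Y3 - s" unfolding Y1_def Y2_def Y3_def by (simp add: algebra_simps)
  have eq: "i*ell - r*M = (i-j)*ell + a" using Aj unfolding a_def by (simp add: algebra_simps)
  have Ppos: "P \<ge> 1" using P Q s by (simp add: mult_nonneg_nonneg)
  have sP: "Y3 - s = P - 1" using P unfolding Y3_def by (simp add: algebra_simps)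
  have hQP: "h*Q*P \<le> (Q-1)*Q*P" using h2 Q Ppos by (simp add: mult_right_mono)
  hence hQP': "X1 \<le> Y2 - Y1" unfolding X1_def Y1_def Y2_def by (simp add: algebra_simps)
  have hP: "h*P \<le> (Q-1)*P" using h2 Ppos by (simp add: mult_right_mono)
  hence hP': "X2 \<le> Y1 - P" unfolding X2_def Y1_def by (simp add: algebra_simps)
  have hs: "h*s \<le> (Q-1)*s" using h2 s by (simp add: mult_right_mono)
  hence hs': "X3 \<le> Y3 - s" unfolding X3_def Y3_def by (simp add: algebra_simps)
  have QP: "Q*P \<ge> P" using Q Ppos by simp
  hence QP': "Y1 \<ge> P" unfolding Y1_def .
  have a_lt: "a < ell" unfolding aX ellX using hQP' hP' hs' sP Q Ppos s QP' by linarith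
  have QQP: "Q*(Q*P) \<ge> 3*(Q*P)" using Q Ppos QP by (simp add: mult_right_mono)
  hence QQP': "Y2 \<ge> 3*Y1" unfolding Y1_def Y2_def by (simp add: algebra_simps)
  have h0: "h*(Q*P) \<ge> Q*P" "h*P \<ge> P" "h*s \<ge> s" using h1 Ppos Q s mult_right_mono[OF h1, of s] mult_right_mono[OF h1, of P] mult_right_mono[OF h1, of "Q*P"] by simp_all
  hence h0': "X1 \<ge> Y1" "X2 \<ge> P" "X3 \<ge> s" unfolding X1_def Y1_def X2_def X3_def by (simp_all add: algebra_simps)
  have QP3: "Y1 \<ge> 3*P" unfolding Y1_def using Q Ppos by simp
  have Y3s: "Y3 \<ge> 3*s" unfolding Y3_def using mult_right_mono[OF Q s] by simp
  have ellN: "ell \<le> (Q-1)*(2*Q*P+P+s)" unfolding ellX NX using Y3s sP QP3 QQP' Ppos s by linarith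
  have a_ge: "a \<ge> -Y1 + P" unfolding aX using h0' s by linarith
  have N_lt: "a + 2*ell > (Q-1)*(2*Q*P+P+s)" unfolding aX ellX NX using h0' QP' sP s Ppos by (simp add: algebra_simps)
  have ellpos: "ell > 0" unfolding ellX using Ppos s QP' QQP' by linarith
  have a0: "0 \<le> a \<longleftrightarrow> 2 \<le> h"
  proof
    assume "0 \<le> a" show "2 \<le> h"
    proof (rule ccontr)
      assume "\<not> 2 \<le> h" then have "h = 1" using h1 by simp
      then have "a = - Y1 + P" unfolding a_def Y1_def by (simp add: algebra_simps)
      moreover have "Y1 \<ge> 3*P" unfolding Y1_def using Q Ppos by simp
      ultimately show False using \<open>0 \<le> a\<close> Ppos by linarith
    qed
  next
    assume "2 \<le> h"
    then show "0 \<le> a" unfolding a_def using Ppos s Q by (simp add: mult_nonneg_nonneg)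
  qed
  have a1: "a + ell \<le> (Q-1)*(2*Q*P+P+s) \<longleftrightarrow> h \<le> Q-2"
  proof
    assume as: "a + ell \<le> (Q-1)*(2*Q*P+P+s)" show "h \<le> Q-2"
    proof (rule ccontr)
      assume "\<not> h \<le> Q-2" then have hq: "h = Q-1" using h2 by simp
      have "X1 = Y2 - Y1" "X2 = Y1 - P" "X3 = Y3 - s" unfolding X1_def X2_def X3_def Y1_def Y2_def Y3_def
        by (simp_all add: hq algebra_simps)
      then show False using as unfolding aX ellX NX using QP3 Q Ppos sP by linarith
    qed
  next
    assume hh: "h \<le> Q-2"
    have "h*(Q*P) \<le> (Q-2)*(Q*P)" "h*P \<le> (Q-2)*P" "h*s \<le> (Q-2)*s" using hh Ppos Q s by (simp_all add: mult_right_mono)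
    then have "X1 \<le> Y2 - 2*Y1" "X2 \<le> Y1 - 2*P" "X3 \<le> Y3 - 2*s" unfolding X1_def X2_def X3_def Y1_def Y2_def Y3_def
        by (simp_all add: algebra_simps)
    then show "a + ell \<le> (Q-1)*(2*Q*P+P+s)" unfolding aX ellX NX using sP s Ppos QP' by linarith
  qed
  show ?thesis
  proof (cases "i - j \<le> -1")
    case True
    have "(i-j)*ell \<le> (-1)*ell" using ellpos True by (intro mult_right_mono) auto
    then have "(i-j)*ell \<le> -ell" by simp
    then have "i*ell - r*M < 0" using eq a_lt by linarith
    moreover have "i \<noteq> j" "i \<noteq> j+1" using True by linarith+
    ultimately show ?thesis by simp
  next
    case F1: False
    show ?thesis
    proof (cases "i - j \<ge> 2")
      case True
      then have "(i-j)*ell \<ge> 2*ell" using ellpos by (intro mult_right_mono) auto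
      then have "i*ell - r*M > (Q-1)*(2*Q*P+P+s)" using eq N_lt by linarith
      moreover have "i \<noteq> j" "i \<noteq> j+1" using True by linarith+
      ultimately show ?thesis by simp
    next
      case False
      then have "i = j \<or> i = j+1" using F1 by linarith
      then show ?thesis
      proof
        assume ij: "i = j"
        then have "i*ell - r*M = a" using eq by simp
        then show ?thesis using ij a0 a_lt ellN by simp
      next
        assume ij: "i = j+1"
        then have "i*ell - r*M = a + ell" using eq by simp
        moreover have "0 \<le> a + ell" using a_ge ellX s Ppos QP' QQP' by linarith
        ultimately show ?thesis using ij a1 by simp
      qed
    qed
  qed
qed

theorem lemma4p4:
  fixes q e h :: nat and ell r N j :: int and a :: "'f::{field,finite}"
  assumes "prime_power q" and "q \<ge> 3" and "e \<ge> 3"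
    and "card (UNIV :: 'f set) = q ^ e" and "a \<noteq> 0"
    and "ell = (\<Sum>i\<le>e-1. int q ^ i)"
    and "1 \<le> h" and "h \<le> q - 1"
    and "r = int h * (ell - int q ^ (e-1) - 1) + 1"
    and "N = 2 * int q ^ (e-1) - int q ^ (e-2) - 1"
    and "j = 2 * int h * int q ^ (e-3) + int h * (\<Sum>i<e-3. int q ^ i)"
  shows "A q ell r N j = of_int ((int h - 2) * int q ^ (e-2) + (2 * int h - 1) * int q ^ (e-3)
                + (int h - 1) * (\<Sum>i<e-3. int q ^ i))
    \<and> A q ell r N (j+1) = of_int (int q ^ (e-1) + (int h - 1) * int q ^ (e-2)
                + 2 * int h * int q ^ (e-3) + int h * (\<Sum>i<e-3. int q ^ i))
    \<and> (h = 1 \<longrightarrow> {A q ell r N i | i. 0 \<le> A q ell r N i \<and> A q ell r N i \<le> of_int N} = {A q ell r N (j+1)})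
       \<and> (2 \<le> h \<and> h \<le> q - 2 \<longrightarrow> {A q ell r N i | i. 0 \<le> A q ell r N i \<and> A q ell r N i \<le> of_int N} = {A q ell r N j, A q ell r N (j+1)})
       \<and> (h = q - 1 \<longrightarrow> {A q ell r N i | i. 0 \<le> A q ell r N i \<and> A q ell r N i \<le> of_int N} = {A q ell r N j})"
proof -
  define m where "m = e - 3"
  have em: "e = m + 3" using assms(3) unfolding m_def by simp
  define Q where "Q = int q"
  define P where "P = Q ^ m"
  define s where "s = (\<Sum>i<m. Q ^ i)"
  have Q3: "Q \<ge> 3" using assms(2) unfolding Q_def by simp
  have s0: "s \<ge> 0" unfolding s_def using Q3 by (intro sum_nonneg) simp
  have Ps: "P = (Q-1)*s+1" unfolding P_def s_def
  proof (induction m)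
    case (Suc n)
    have "(Q-1)*(\<Sum>i<Suc n. Q ^ i) + 1 = ((Q-1)*(\<Sum>i<n. Q ^ i) + 1) + (Q-1)*Q^n" by (simp add: algebra_simps)
    also have "\<dots> = Q^n + (Q-1)*Q^n" using Suc.IH by simp
    also have "\<dots> = Q^Suc n" by (simp add: algebra_simps)
    finally show ?case by simp
  qed simp
  have e1: "int q ^ (e-1) = Q^2*P" "int q ^ (e-2) = Q*P" "int q ^ (e-3) = P" "(\<Sum>i<e-3. int q ^ i) = s"
    unfolding em P_def Q_def s_def by (simp_all add: power_add power2_eq_square numeral_eq_Suc)
  have ellE: "ell = s + P + Q*P + Q^2*P"
  proof -
    have "{..e-1} = {..<m+3}" unfolding em by auto
    then have "ell = (\<Sum>i<m+3. Q ^ i)" using assms(6) unfolding Q_def by simp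
    also have "\<dots> = s + P + Q*P + Q^2*P" unfolding s_def P_def
      by (simp add: numeral_eq_Suc power2_eq_square algebra_simps)
    finally show ?thesis .
  qed
  define M where "M = 2*Q*P+P+s"
  have rE: "r = int h * (Q*P+P+s-1) + 1" using assms(9) ellE e1 by simp
  have N1: "N = 2*(Q^2*P) - Q*P - 1" using assms(10) e1 by simp
  have M1: "(Q-1)*M = 2*(Q^2*P) - Q*P - P + ((Q-1)*s)" unfolding M_def by (simp add: algebra_simps power2_eq_square)
  have NE: "N = (Q-1)*M" using N1 M1 Ps by linarith
  have jE: "j = 2*int h*P + int h*s" using assms(11) e1 by simp
  have AE: "A q ell r N i = of_int (i*ell - r*M)" for i
  proof -
    have nz: "(of_int (int q - 1) :: rat) \<noteq> 0" using Q3 unfolding Q_def by simp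
    have rn: "(of_int (r*N) :: rat) = of_int (r*M) * of_int (int q - 1)"
      unfolding NE Q_def of_int_mult[symmetric] by (simp add: algebra_simps)
    have "of_int (r*N) / of_int (int q - 1) = (of_int (r*M) :: rat)"
      unfolding rn using nz by (rule nonzero_mult_div_cancel_right)
    then show ?thesis unfolding A_def by simp
  qed
  have h1: "1 \<le> int h" using assms(7) by simp
  have h2: "int h \<le> Q - 1" using assms(8) assms(2) unfolding Q_def by simp
  have Aj: "j*ell - r*M = (int h-2)*Q*P + (2*int h-1)*P + (int h-1)*s"
    unfolding jE ellE rE M_def using core_id[OF Ps, of "int h"] by simp
  have key: "(0 \<le> i*ell - r*M \<and> i*ell - r*M \<le> N) \<longleftrightarrow> ((i = j \<and> 2 \<le> h) \<or> (i = j+1 \<and> int h \<le> Q-2))" for i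
    using core_set[OF Q3 s0 Ps h1 h2 ellE Aj, of i] NE unfolding M_def by simp
  have hq2: "(h \<le> q - 2) = (int h \<le> Q - 2)" using assms(2) unfolding Q_def by auto
  have SE: "{A q ell r N i | i. 0 \<le> A q ell r N i \<and> A q ell r N i \<le> of_int N}
      = {of_int (i*ell - r*M) | i. (i = j \<and> 2 \<le> h) \<or> (i = j+1 \<and> int h \<le> Q-2)}"
    unfolding AE using key by (simp only: of_int_0_le_iff of_int_le_iff)
  have p1: "A q ell r N j = of_int ((int h - 2) * int q ^ (e-2) + (2 * int h - 1) * int q ^ (e-3)
                + (int h - 1) * (\<Sum>i<e-3. int q ^ i))"
    unfolding AE Aj e1 by (simp add: algebra_simps)
  have p2: "A q ell r N (j+1) = of_int (int q ^ (e-1) + (int h - 1) * int q ^ (e-2)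
                + 2 * int h * int q ^ (e-3) + int h * (\<Sum>i<e-3. int q ^ i))"
  proof -
    have "(j+1)*ell - r*M = (j*ell - r*M) + ell" by (simp add: algebra_simps)
    also have "\<dots> = ((int h-2)*Q*P + (2*int h-1)*P + (int h-1)*s) + (s + P + Q*P + Q^2*P)"
      using Aj ellE by simp
    also have "\<dots> = int q ^ (e-1) + (int h - 1) * int q ^ (e-2)
                + 2 * int h * int q ^ (e-3) + int h * (\<Sum>i<e-3. int q ^ i)"
      unfolding e1 by (simp add: algebra_simps)
    finally show ?thesis unfolding AE by simp
  qed
  show ?thesis
  proof (intro conjI impI p1 p2)
    assume "h = 1"
    then have "\<not> 2 \<le> h" "int h \<le> Q - 2" using Q3 by auto
    then show "{A q ell r N i | i. 0 \<le> A q ell r N i \<and> A q ell r N i \<le> of_int N} = {A q ell r N (j+1)}"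
      unfolding SE by (auto simp: AE)
  next
    assume "2 \<le> h \<and> h \<le> q - 2"
    then have "2 \<le> h" "int h \<le> Q - 2" using hq2 by auto
    then have "{A q ell r N i | i. 0 \<le> A q ell r N i \<and> A q ell r N i \<le> of_int N} = {of_int (i*ell - r*M) | i. i = j \<or> i = j+1}"
      unfolding SE by simp
    then show "{A q ell r N i | i. 0 \<le> A q ell r N i \<and> A q ell r N i \<le> of_int N} = {A q ell r N j, A q ell r N (j+1)}"
      unfolding AE by blast
  next
    assume "h = q - 1"
    then have "2 \<le> h" "\<not> int h \<le> Q - 2" using assms(2) unfolding Q_def by auto
    then show "{A q ell r N i | i. 0 \<le> A q ell r N i \<and> A q ell r N i \<le> of_int N} = {A q ell r N j}"
      unfolding SE by (auto simp: AE)
  qed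
qed

end
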